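(* Let $\mathcal K_{\texttt{SFL}}$ be a nonempty finite set of clients, and for each $\tilde k\in\mathcal K_{\texttt{SFL}}$ let $$a_{\tilde k}=I_{\tilde k}|\mathcal B_{\tilde k}|(F^{\mathrm S}_{\tilde k}+B^{\mathrm S}_{\tilde k})>0,\qquad c_{\tilde k}=\frac{I_{\tilde k}|\mathcal B_{\tilde k}|(F^{\mathrm C}_{\tilde k}+B^{\mathrm C}_{\tilde k})}{f^{\mathrm C}_{\tilde k}}+2\,\frac{I_{\tilde k}|\mathcal B_{\tilde k}|\Lambda_{\tilde k}+|\mathbf w^{\mathrm C}_{\tilde k}|}{r_{\tilde k}}.$$ For $F^{\max}>0$, let $T_\theta=T_\theta(F^{\max})>\max_{\tilde k}c_{\tilde k}$ be defined by the equation $$\sum_{\tilde k\in\mathcal K_{\texttt{SFL}}}\frac{a_{\tilde k}}{T_\theta-c_{\tilde k}}=F^{\max}.$$ Then $T_\theta$ is strictly convex with respect to $F^{\max}$.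
   Context: Split federated learning setting: $F^{\max}$ is the total computing power of the server; for each client $\tilde k$, $I_{\tilde k}$ is the number of local epochs, $|\mathcal B_{\tilde k}|$ the mini-batch size, $F^{\mathrm C}_{\tilde k},B^{\mathrm C}_{\tilde k}\geqslant 0$ and $F^{\mathrm S}_{\tilde k},B^{\mathrm S}_{\tilde k}\geqslant 0$ the per-sample forward/backward computation of the client-side and server-side models, $f^{\mathrm C}_{\tilde k}>0$ the client computing power, $r_{\tilde k}>0$ the data rate, $\Lambda_{\tilde k}\geqslant0$ the per-sample intermediate-result size and $|\mathbf w^{\mathrm C}_{\tilde k}|\geqslant 0$ the client-side model size. $T_\theta$ is the common latency of the clients in $\mathcal K_{\texttt{SFL}}$ when the server's resources are fully allocated among them. *)

theory Defs
  imports "HOL-Analysis.Analysis"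
begin

definition strictly_convex_on :: "real set \<Rightarrow> (real \<Rightarrow> real) \<Rightarrow> bool" where
  "strictly_convex_on S f \<longleftrightarrow>
     (\<forall>x\<in>S. \<forall>y\<in>S. \<forall>u::real. x \<noteq> y \<and> 0 < u \<and> u < 1 \<longrightarrow>
        f (u * x + (1 - u) * y) < u * f x + (1 - u) * f y)"

definition T_theta :: "'k set \<Rightarrow> ('k \<Rightarrow> real) \<Rightarrow> ('k \<Rightarrow> real) \<Rightarrow> real \<Rightarrow> real" where
  "T_theta K a c F = (THE T. (\<forall>k\<in>K. T > c k) \<and> (\<Sum>k\<in>K. a k / (T - c k)) = F)"

end

theory Submission
  imports Defs
begin

lemma G_dec:
  fixes a c :: "'k \<Rightarrow> real"
  assumes "finite K" "K \<noteq> {}" "\<And>k. k \<in> K \<Longrightarrow> a k > 0"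
    "\<And>k. k \<in> K \<Longrightarrow> c k < s" "s < t"
  shows "(\<Sum>k\<in>K. a k / (t - c k)) < (\<Sum>k\<in>K. a k / (s - c k))"
proof (rule sum_strict_mono[OF assms(1,2)])
  fix k assume k: "k \<in> K"
  have "c k < s" using assms(4) k by auto
  then show "a k / (t - c k) < a k / (s - c k)"
    using assms(3)[OF k] assms(5) by (intro divide_strict_left_mono) (auto intro: mult_pos_pos)
qed

lemma conv_term:
  fixes s t u :: real
  assumes "s > 0" "t > 0" "s \<noteq> t" "0 < u" "u < 1"
  shows "1 / (u * s + (1 - u) * t) < u / s + (1 - u) / t"
proof -
  have p: "u * s + (1 - u) * t > 0" using assms by (intro add_pos_pos) auto
  have "s * t < (u * s + (1 - u) * t) * (u * t + (1 - u) * s)"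
  proof -
    have "(u * s + (1 - u) * t) * (u * t + (1 - u) * s) - s * t = u * (1 - u) * (s - t)^2"
      by (simp add: algebra_simps power2_eq_square)
    moreover have "u * (1 - u) * (s - t)^2 > 0" using assms by simp
    ultimately show ?thesis by linarith
  qed
  then have "1 / (u * s + (1 - u) * t) < (u * t + (1 - u) * s) / (s * t)"
    using p assms by (simp add: divide_simps mult.commute)
  also have "\<dots> = u / s + (1 - u) / t" using assms by (simp add: field_simps)
  finally show ?thesis .
qed

lemma T_prop:
  fixes a c :: "'k \<Rightarrow> real"
  assumes fin: "finite K" and ne: "K \<noteq> {}" and apos: "\<And>k. k \<in> K \<Longrightarrow> a k > 0" and F: "F > 0"
  shows "(\<forall>k\<in>K. T_theta K a c F > c k) \<and> (\<Sum>k\<in>K. a k / (T_theta K a c F - c k)) = F"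
proof -
  define G where "G T = (\<Sum>k\<in>K. a k / (T - c k))" for T
  define M where "M = Max (c ` K)"
  have cM: "c k \<le> M" if "k \<in> K" for k using fin that unfolding M_def by auto
  obtain k0 where k0: "k0 \<in> K" "c k0 = M" using fin ne unfolding M_def
    by (metis (no_types, lifting) Max_in finite_imageI image_iff image_is_empty)
  define S where "S = (\<Sum>k\<in>K. a k)"
  have S0: "S > 0" unfolding S_def using fin ne apos by (intro sum_pos) auto
  define T1 where "T1 = M + a k0 / (2 * F)"
  define T2 where "T2 = M + S / F"
  have a0: "a k0 > 0" using apos k0 by auto
  have T1M: "T1 > M" unfolding T1_def using a0 F by simp
  have T2M: "T2 > M" unfolding T2_def using S0 F by simp
  have G1: "G T1 \<ge> 2 * F"
  proof -
    have "G T1 \<ge> a k0 / (T1 - c k0)"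
      unfolding G_def
      using fin k0 T1M cM apos
    proof (intro member_le_sum)
      fix x assume "x \<in> K - {k0}"
      then have "0 < a x" "c x < T1" using apos cM T1M by (auto, force)
      then show "0 \<le> a x / (T1 - c x)" by simp
    qed (use k0 fin in auto)
    also have "a k0 / (T1 - c k0) = 2 * F" using k0 a0 F unfolding T1_def by simp
    finally show ?thesis .
  qed
  have G2: "G T2 \<le> F"
  proof -
    have "G T2 \<le> (\<Sum>k\<in>K. a k * F / S)"
      unfolding G_def
    proof (rule sum_mono)
      fix k assume k: "k \<in> K"
      have "S / F \<le> T2 - c k" using cM[OF k] unfolding T2_def by simp
      then have "a k / (T2 - c k) \<le> a k / (S / F)"
      proof (rule divide_left_mono)
        show "0 < (T2 - c k) * (S / F)" using \<open>S / F \<le> T2 - c k\<close> S0 F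
          by (intro mult_pos_pos) (auto, smt (verit) divide_pos_pos)
      qed (use apos[OF k] in auto)
      then show "a k / (T2 - c k) \<le> a k * F / S" by simp
    qed
    also have "\<dots> = F" unfolding S_def[symmetric]
      using S0 by (simp add: sum_divide_distrib[symmetric] sum_distrib_right[symmetric] S_def)
    finally show ?thesis .
  qed
  have T12: "T1 \<le> T2"
  proof (rule ccontr)
    assume "\<not> T1 \<le> T2"
    then have "G T1 < G T2" unfolding G_def using G_dec[OF fin ne apos, where c=c and s=T2 and t=T1] cM T2M
      by force
    then show False using G1 G2 F by linarith
  qed
  have cont: "continuous_on {T1..T2} G"
    unfolding G_def
  proof (intro continuous_intros)
    fix k assume k: "k \<in> K"
    show "\<forall>x\<in>{T1..T2}. x - c k \<noteq> 0" using cM[OF k] T1M by force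
  qed
  obtain T0 where T0: "T1 \<le> T0" "T0 \<le> T2" "G T0 = F"
    using IVT2'[of G T2 F T1, OF G2 _ T12 cont] G1 F by auto
  have P0k: "\<forall>k\<in>K. T0 > c k"
  proof
    fix k assume "k \<in> K" then show "T0 > c k" using cM[of k] T1M T0(1) by linarith
  qed
  have uniq: "T = T0" if h: "(\<forall>k\<in>K. T > c k) \<and> G T = F" for T
  proof (rule ccontr)
    assume "T \<noteq> T0"
    then consider "T < T0" | "T0 < T" by linarith
    then show False
    proof cases
      case 1
      have "(\<Sum>k\<in>K. a k / (T0 - c k)) < (\<Sum>k\<in>K. a k / (T - c k))"
        by (rule G_dec[OF fin ne apos]) (use h 1 in auto)
      then have "G T0 < G T" unfolding G_def .
      then show False using h T0(3) by linarith
    next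
      case 2
      have "(\<Sum>k\<in>K. a k / (T - c k)) < (\<Sum>k\<in>K. a k / (T0 - c k))"
        by (rule G_dec[OF fin ne apos]) (use P0k 2 in auto)
      then have "G T < G T0" unfolding G_def .
      then show False using h T0(3) by linarith
    qed
  qed
  have "(\<forall>k\<in>K. T_theta K a c F > c k) \<and> G (T_theta K a c F) = F"
    unfolding T_theta_def G_def[symmetric]
    by (rule theI[of _ T0]) (use P0k T0(3) uniq in blast)+
  then show ?thesis unfolding G_def by simp
qed

theorem lemma5:
  fixes K :: "'k set"
    and I Bsz :: "'k \<Rightarrow> nat"
    and FC BC FS BS fC r Lam wC :: "'k \<Rightarrow> real"
    and a c :: "'k \<Rightarrow> real"
  assumes "finite K" and "K \<noteq> {}"
    and "\<And>k. k \<in> K \<Longrightarrow> FC k \<ge> 0" and "\<And>k. k \<in> K \<Longrightarrow> BC k \<ge> 0"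
    and "\<And>k. k \<in> K \<Longrightarrow> FS k \<ge> 0" and "\<And>k. k \<in> K \<Longrightarrow> BS k \<ge> 0"
    and "\<And>k. k \<in> K \<Longrightarrow> fC k > 0" and "\<And>k. k \<in> K \<Longrightarrow> r k > 0"
    and "\<And>k. k \<in> K \<Longrightarrow> Lam k \<ge> 0" and "\<And>k. k \<in> K \<Longrightarrow> wC k \<ge> 0"
    and a_def: "\<And>k. a k = real (I k) * real (Bsz k) * (FS k + BS k)"
    and c_def: "\<And>k. c k = real (I k) * real (Bsz k) * (FC k + BC k) / fC k
                   + 2 * (real (I k) * real (Bsz k) * Lam k + wC k) / r k"
    and a_pos: "\<And>k. k \<in> K \<Longrightarrow> a k > 0"
  shows "strictly_convex_on {0<..} (\<lambda>Fmax. T_theta K a c Fmax)"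
proof -
  note fin = assms(1) and ne = assms(2)
  have apos: "\<And>k. k \<in> K \<Longrightarrow> a k > 0" by (rule a_pos)
  let ?T = "T_theta K a c"
  show ?thesis unfolding strictly_convex_on_def
  proof (intro ballI allI impI)
    fix x y u :: real
    assume x: "x \<in> {0<..}" and y: "y \<in> {0<..}" and h: "x \<noteq> y \<and> 0 < u \<and> u < 1"
    have xp: "x > 0" and yp: "y > 0" using x y by auto
    have u0: "0 < u" "u < 1" using h by auto
    have zp: "u * x + (1 - u) * y > 0" using xp yp u0 by (intro add_pos_pos) auto
    have Px: "(\<forall>k\<in>K. ?T (x) > c k) \<and> (\<Sum>k\<in>K. a k / (?T (x) - c k)) = (x)"
      by (rule T_prop[OF fin ne _ xp]) (rule a_pos)
    have Py: "(\<forall>k\<in>K. ?T (y) > c k) \<and> (\<Sum>k\<in>K. a k / (?T (y) - c k)) = (y)"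
      by (rule T_prop[OF fin ne _ yp]) (rule a_pos)
    have Pz: "(\<forall>k\<in>K. ?T (u * x + (1 - u) * y) > c k) \<and> (\<Sum>k\<in>K. a k / (?T (u * x + (1 - u) * y) - c k)) = (u * x + (1 - u) * y)"
      by (rule T_prop[OF fin ne _ zp]) (rule a_pos)
    define Tm where "Tm = u * ?T x + (1 - u) * ?T y"
    have neq: "?T x \<noteq> ?T y" using Px Py h by metis
    have Tmc: "\<forall>k\<in>K. c k < Tm"
    proof
      fix k assume k: "k \<in> K"
      have "c k = u * c k + (1 - u) * c k" by (simp add: algebra_simps)
      also have "\<dots> < Tm" unfolding Tm_def using Px Py k u0
        by (intro add_less_le_mono mult_strict_left_mono mult_left_mono) auto
      finally show "c k < Tm" .
    qed
    have "(\<Sum>k\<in>K. a k / (Tm - c k)) < (\<Sum>k\<in>K. u * (a k / (?T x - c k)) + (1 - u) * (a k / (?T y - c k)))"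
    proof (rule sum_strict_mono[OF fin ne])
      fix k assume k: "k \<in> K"
      define s where "s = ?T x - c k"
      define t where "t = ?T y - c k"
      have sp: "s > 0" and tp: "t > 0" using Px Py k unfolding s_def t_def by auto
      have st: "s \<noteq> t" using neq unfolding s_def t_def by auto
      have e: "Tm - c k = u * s + (1 - u) * t" unfolding Tm_def s_def t_def by (simp add: algebra_simps)
      have "a k * (1 / (u * s + (1 - u) * t)) < a k * (u / s + (1 - u) / t)"
        by (rule mult_strict_left_mono[OF conv_term[OF sp tp st u0] apos[OF k]])
      then show "a k / (Tm - c k) < u * (a k / (?T x - c k)) + (1 - u) * (a k / (?T y - c k))"
        unfolding e s_def[symmetric] t_def[symmetric] by (simp add: algebra_simps)
    qed
    also have "\<dots> = u * x + (1 - u) * y"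
      using Px Py by (simp add: sum.distrib sum_distrib_left[symmetric] del: times_divide_eq_right)
    also have "\<dots> = (\<Sum>k\<in>K. a k / (?T (u * x + (1 - u) * y) - c k))" using Pz by simp
    finally have lt: "(\<Sum>k\<in>K. a k / (Tm - c k)) < (\<Sum>k\<in>K. a k / (?T (u * x + (1 - u) * y) - c k))" .
    show "?T (u * x + (1 - u) * y) < u * ?T x + (1 - u) * ?T y"
    proof (rule ccontr)
      assume "\<not> ?thesis"
      then have "Tm \<le> ?T (u * x + (1 - u) * y)" unfolding Tm_def by simp
      then consider "Tm = ?T (u * x + (1 - u) * y)" | "Tm < ?T (u * x + (1 - u) * y)" by linarith
      then show False
      proof cases
        case 1 then show False using lt by simp
      next
        case 2
        have "(\<Sum>k\<in>K. a k / (?T (u * x + (1 - u) * y) - c k)) < (\<Sum>k\<in>K. a k / (Tm - c k))"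
          by (rule G_dec[OF fin ne apos]) (use Tmc 2 in auto)
        then show False using lt by linarith
      qed
    qed
  qed
qed

end
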